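(* Let $G$ be a nonempty $p$-regular multigraph and $W\sim\mathrm{Wig}$. Then $\mathbb{E}_W\, m^c_G(W)=0$.
   Context: $\mathrm{Wig}=\mathrm{Wig}(p,n,1)$ is the law of the symmetric tensor $W\in\mathrm{Sym}^p(\mathbb{R}^n)$ with $W_{i_1,\dots,i_p}=\frac{1}{\sqrt{p!}}\sum_{\pi\in S_p}G_{i_{\pi(1)},\dots,i_{\pi(p)}}$, $G$ having i.i.d. $\mathcal{N}(0,1)$ entries; for a multiset $S$ of $p$ elements of $[n]$, $T_S$ denotes the corresponding entry of a symmetric tensor $T$. Multigraphs $G=(V,E)$ may have loops and parallel edges (a loop contributes 2 to the degree); $p$-regular means all degrees equal $p$. For $i\in[n]^E$, $i(\partial v)$ is the multiset of labels of edges at $v$ (loop labels counted twice). A Frobenius pair is a connected component consisting of two vertices joined by $p$ parallel edges; let $U$ be the set of vertices lying in Frobenius pairs, and for such a pair $\pi$ let $i(\pi)$ be the multiset of its $p$ edge labels. With $b=|E|$, $$m^c_G(T)=\sum_{\substack{i\in[n]^E\\ i_1,\dots,i_b\text{ distinct}}}\Big[\prod_{v\in V\setminus U}T_{i(\partial v)}\prod_{\pi}\big(T_{i(\pi)}^2-1\big)\Big],$$ the second product over the Frobenius pairs $\pi$ of $G$. *)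

theory Defs
  imports "HOL-Probability.Probability" "HOL-Library.Multiset" "HOL-Combinatorics.Permutations"
begin

text \<open>Finite multigraph: vertex set V, edge set E, each edge e has a multiset
  of two endpoints ends e (a loop at v has ends e = {#v,v#}).\<close>
definition multigraph :: "'v set \<Rightarrow> 'e set \<Rightarrow> ('e \<Rightarrow> 'v multiset) \<Rightarrow> bool" where
  "multigraph V E ends \<longleftrightarrow> finite V \<and> finite E \<and>
     (\<forall>e\<in>E. size (ends e) = 2 \<and> set_mset (ends e) \<subseteq> V)"

text \<open>Degree; a loop contributes 2.\<close>
definition deg :: "'e set \<Rightarrow> ('e \<Rightarrow> 'v multiset) \<Rightarrow> 'v \<Rightarrow> nat" where
  "deg E ends v = (\<Sum>e\<in>E. count (ends e) v)"

definition regular :: "nat \<Rightarrow> 'v set \<Rightarrow> 'e set \<Rightarrow> ('e \<Rightarrow> 'v multiset) \<Rightarrow> bool" where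
  "regular p V E ends \<longleftrightarrow> (\<forall>v\<in>V. deg E ends v = p)"

text \<open>u and w form a Frobenius pair: a connected component consisting of the two
  distinct vertices u, w joined by p parallel edges (every edge at u or w joins u and w,
  and there are exactly p of them).\<close>
definition frob_pair :: "nat \<Rightarrow> 'v set \<Rightarrow> 'e set \<Rightarrow> ('e \<Rightarrow> 'v multiset) \<Rightarrow> 'v \<Rightarrow> 'v \<Rightarrow> bool" where
  "frob_pair p V E ends u w \<longleftrightarrow> u \<in> V \<and> w \<in> V \<and> u \<noteq> w \<and>
     (\<forall>e\<in>E. (u \<in># ends e \<or> w \<in># ends e) \<longrightarrow> ends e = {#u, w#}) \<and>
     card {e\<in>E. ends e = {#u, w#}} = p"

definition frob_pairs :: "nat \<Rightarrow> 'v set \<Rightarrow> 'e set \<Rightarrow> ('e \<Rightarrow> 'v multiset) \<Rightarrow> 'v set set" where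
  "frob_pairs p V E ends = {{u, w} | u w. frob_pair p V E ends u w}"

definition frob_vertices :: "nat \<Rightarrow> 'v set \<Rightarrow> 'e set \<Rightarrow> ('e \<Rightarrow> 'v multiset) \<Rightarrow> 'v set" where
  "frob_vertices p V E ends = \<Union> (frob_pairs p V E ends)"

text \<open>i(\<partial>v): multiset of labels of edges at v, loop labels counted twice.\<close>
definition labels_at :: "'e set \<Rightarrow> ('e \<Rightarrow> 'v multiset) \<Rightarrow> ('e \<Rightarrow> nat) \<Rightarrow> 'v \<Rightarrow> nat multiset" where
  "labels_at E ends i v = (\<Sum>e\<in>E. replicate_mset (count (ends e) v) (i e))"

definition labels_pair :: "'e set \<Rightarrow> ('e \<Rightarrow> 'v multiset) \<Rightarrow> ('e \<Rightarrow> nat) \<Rightarrow> 'v set \<Rightarrow> nat multiset" where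
  "labels_pair E ends i P = image_mset i (mset_set {e\<in>E. ends e = mset_set P})"

text \<open>Symmetric tensors in Sym^p(R^n) are represented by their entries T S, indexed by
  multisets S of elements of [n] = {0..<n} of size p.
  m^c_G(T): sum over injective labellings i : E \<rightarrow> [n].\<close>
definition mc :: "nat \<Rightarrow> nat \<Rightarrow> 'v set \<Rightarrow> 'e set \<Rightarrow> ('e \<Rightarrow> 'v multiset) \<Rightarrow> (nat multiset \<Rightarrow> real) \<Rightarrow> real" where
  "mc p n V E ends T =
     (\<Sum>i\<in>{i\<in>E \<rightarrow>\<^sub>E {0..<n}. inj_on i E}.
        (\<Prod>v\<in>V - frob_vertices p V E ends. T (labels_at E ends i v)) *
        (\<Prod>P\<in>frob_pairs p V E ends. (T (labels_pair E ends i P))\<^sup>2 - 1))"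

text \<open>Index set [n]^p of the Gaussian array G (index tuples as lists of length p).\<close>
definition gauss_idx :: "nat \<Rightarrow> nat \<Rightarrow> nat list set" where
  "gauss_idx p n = {xs. length xs = p \<and> set xs \<subseteq> {0..<n}}"

definition gauss_array :: "nat \<Rightarrow> nat \<Rightarrow> (nat list \<Rightarrow> real) measure" where
  "gauss_array p n = PiM (gauss_idx p n) (\<lambda>_. density lborel std_normal_density)"

definition wig :: "nat \<Rightarrow> (nat list \<Rightarrow> real) \<Rightarrow> nat multiset \<Rightarrow> real" where
  "wig p G S = (let xs = sorted_list_of_multiset S in
     (1 / sqrt (fact p)) * (\<Sum>\<sigma>\<in>{\<sigma>. \<sigma> permutes {..<p}}. G (map (\<lambda>k. xs ! \<sigma> k) [0..<p])))"

end

theory Submission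
  imports Defs
begin

definition tup :: "nat \<Rightarrow> nat multiset \<Rightarrow> (nat \<Rightarrow> nat) \<Rightarrow> nat list" where
  "tup p S \<sigma> = map (\<lambda>k. sorted_list_of_multiset S ! \<sigma> k) [0..<p]"

lemma wig_tup: "wig p G S = (1 / sqrt (fact p)) * (\<Sum>\<sigma>\<in>{\<sigma>. \<sigma> permutes {..<p}}. G (tup p S \<sigma>))"
  by (simp add: wig_def tup_def Let_def)

lemma tup_props:
  assumes "size S = p" "\<sigma> permutes {..<p}"
  shows "mset (tup p S \<sigma>) = S" "length (tup p S \<sigma>) = p" "set (tup p S \<sigma>) \<subseteq> set_mset S"
proof -
  let ?xs = "sorted_list_of_multiset S"
  have len: "length ?xs = p"
    by (metis assms(1) mset_sorted_list_of_multiset size_mset)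
  have "tup p S \<sigma> = permute_list \<sigma> ?xs" by (simp add: tup_def permute_list_def len)
  then show "mset (tup p S \<sigma>) = S" using assms len by (simp add: mset_permute_list)
  show "length (tup p S \<sigma>) = p" by (simp add: tup_def)
  show "set (tup p S \<sigma>) \<subseteq> set_mset S"
  proof
    fix x assume "x \<in> set (tup p S \<sigma>)"
    then obtain k where k: "k < p" "x = ?xs ! \<sigma> k" by (auto simp: tup_def)
    have "\<sigma> k < p" using permutes_in_image[OF assms(2)] k by auto
    then have "x \<in> set ?xs" using k len by (metis nth_mem)
    then show "x \<in> set_mset S" by (metis mset_sorted_list_of_multiset set_mset_mset)
  qed
qed

lemma tup_inj:
  assumes "size S = p" "distinct (sorted_list_of_multiset S)" "\<sigma> permutes {..<p}" "\<tau> permutes {..<p}"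
    and "tup p S \<sigma> = tup p S \<tau>"
  shows "\<sigma> = \<tau>"
proof
  fix k
  let ?xs = "sorted_list_of_multiset S"
  have len: "length ?xs = p"
    by (metis assms(1) mset_sorted_list_of_multiset size_mset)
  show "\<sigma> k = \<tau> k"
  proof (cases "k < p")
    case True
    have "tup p S \<sigma> ! k = tup p S \<tau> ! k" using assms(5) by simp
    then have eq: "?xs ! \<sigma> k = ?xs ! \<tau> k" using True by (simp add: tup_def)
    have "\<sigma> k < p" "\<tau> k < p" using permutes_in_image[OF assms(3)] permutes_in_image[OF assms(4)] True by auto
    then show ?thesis using eq assms(2) len nth_eq_iff_index_eq by metis
  next
    case False
    then show ?thesis using permutes_not_in[OF assms(3)] permutes_not_in[OF assms(4)] by auto
  qed
qed

lemma N_prob: "prob_space std_normal_distribution"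
  by (rule prob_space_normal_density) simp

lemma M_prob: "prob_space (gauss_array p n)"
  unfolding gauss_array_def by (rule prob_space_PiM) (rule N_prob)

lemma sets_N: "sets (density lborel std_normal_density) = sets borel"
  by simp

lemma coord_meas:
  assumes "t \<in> gauss_idx p n"
  shows "(\<lambda>G. G t) \<in> borel_measurable (gauss_array p n)"
proof -
  have "(\<lambda>G. G t) \<in> measurable (gauss_array p n) (density lborel std_normal_density)"
    unfolding gauss_array_def using assms by (rule measurable_component_singleton)
  then show ?thesis using measurable_cong_sets[OF refl sets_N] by blast
qed

lemma coord_moment:
  assumes "t \<in> gauss_idx p n"
  shows "integrable (gauss_array p n) (\<lambda>G. (G t)^k)"
    "integral\<^sup>L (gauss_array p n) (\<lambda>G. (G t)^k) = integral\<^sup>L std_normal_distribution (\<lambda>x. x^k)"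
proof -
  have d: "distr (gauss_array p n) std_normal_distribution (\<lambda>G. G t) = std_normal_distribution"
    unfolding gauss_array_def using assms by (intro distr_PiM_component N_prob)
  have m: "(\<lambda>G. G t) \<in> measurable (gauss_array p n) std_normal_distribution"
    unfolding gauss_array_def using assms by (rule measurable_component_singleton)
  have "integrable (distr (gauss_array p n) std_normal_distribution (\<lambda>G. G t)) (\<lambda>x. x^k)"
    unfolding d by (rule integrable_std_normal_distribution_moment)
  then show "integrable (gauss_array p n) (\<lambda>G. (G t)^k)"
    using integrable_distr_eq[OF m, of "\<lambda>x. x^k"] by simp
  have "integral\<^sup>L (distr (gauss_array p n) std_normal_distribution (\<lambda>G. G t)) (\<lambda>x. x^k)
     = integral\<^sup>L (gauss_array p n) (\<lambda>G. (G t)^k)"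
    by (rule integral_distr[OF m]) simp
  then show "integral\<^sup>L (gauss_array p n) (\<lambda>G. (G t)^k) = integral\<^sup>L std_normal_distribution (\<lambda>x. x^k)"
    unfolding d by simp
qed

lemma coord_indep:
  assumes "gauss_idx p n \<noteq> {}"
  shows "prob_space.indep_vars (gauss_array p n) (\<lambda>_. borel) (\<lambda>t G. G t) (gauss_idx p n)"
proof -
  interpret P: prob_space "gauss_array p n" by (rule M_prob)
  let ?I = "gauss_idx p n" and ?N = "density lborel std_normal_density"
  have rv: "(\<lambda>G. G t) \<in> measurable (gauss_array p n) ?N" for t
  proof (cases "t \<in> ?I")
    case True then show ?thesis unfolding gauss_array_def by (rule measurable_component_singleton)
  next
    case False
    have "(\<lambda>G. G t) \<in> measurable (gauss_array p n) ?N \<longleftrightarrow> (\<lambda>G. undefined) \<in> measurable (gauss_array p n) ?N"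
      by (rule measurable_cong) (use False in \<open>auto simp: gauss_array_def space_PiM PiE_def extensional_def\<close>)
    then show ?thesis by simp
  qed
  have "P.indep_vars (\<lambda>_. ?N) (\<lambda>t G. G t) ?I"
  proof (subst P.indep_vars_iff_distr_eq_PiM[OF assms rv])
    have "distr (gauss_array p n) (Pi\<^sub>M ?I (\<lambda>_. ?N)) (\<lambda>x. \<lambda>t\<in>?I. x t) = distr (gauss_array p n) (gauss_array p n) (\<lambda>x. x)"
      unfolding gauss_array_def
      by (rule distr_cong) (auto simp: space_PiM PiE_def extensional_def restrict_def)
    also have "\<dots> = gauss_array p n" by simp
    also have "\<dots> = Pi\<^sub>M ?I (\<lambda>t. distr (gauss_array p n) ?N (\<lambda>x. x t))"
      unfolding gauss_array_def
      by (rule PiM_cong) (simp_all add: distr_PiM_component[OF N_prob])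
    finally show "distr (gauss_array p n) (Pi\<^sub>M ?I (\<lambda>_. ?N)) (\<lambda>x. \<lambda>t\<in>?I. x t) = Pi\<^sub>M ?I (\<lambda>t. distr (gauss_array p n) ?N (\<lambda>x. x t))" .
  qed
  then have "P.indep_vars (\<lambda>_. borel) (\<lambda>t G. (\<lambda>x. x) (G t)) ?I"
    by (rule P.indep_vars_compose2) (simp add: measurable_cong_sets[OF sets_N refl])
  then show ?thesis by simp
qed

lemma tup_in:
  assumes "size S = p" "set_mset S \<subseteq> {0..<n}" "\<sigma> permutes {..<p}"
  shows "tup p S \<sigma> \<in> gauss_idx p n"
  using tup_props[OF assms(1,3)] assms(2) by (auto simp: gauss_idx_def)

lemma coord1:
  assumes "t \<in> gauss_idx p n"
  shows "integrable (gauss_array p n) (\<lambda>G. G t)" "integral\<^sup>L (gauss_array p n) (\<lambda>G. G t) = 0"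
  using coord_moment[OF assms, of 1] integral_std_normal_distribution_moment_odd[of 1] by simp_all

lemma coord2:
  assumes "t \<in> gauss_idx p n"
  shows "integrable (gauss_array p n) (\<lambda>G. G t * G t)" "integral\<^sup>L (gauss_array p n) (\<lambda>G. G t * G t) = 1"
  using coord_moment[OF assms, of 2] std_normal_distribution_even_moments(1)[of 1]
  by (simp_all add: power2_eq_square)

lemma cross:
  assumes "t \<in> gauss_idx p n" "s \<in> gauss_idx p n" "t \<noteq> s"
  shows "integrable (gauss_array p n) (\<lambda>G. G t * G s)" "integral\<^sup>L (gauss_array p n) (\<lambda>G. G t * G s) = 0"
proof -
  interpret P: prob_space "gauss_array p n" by (rule M_prob)
  have ind: "P.indep_vars (\<lambda>_. borel) (\<lambda>t G. G t) {t, s}"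
    using coord_indep[of p n] assms by (auto intro: P.indep_vars_subset)
  have int: "\<And>j. j \<in> {t, s} \<Longrightarrow> integrable (gauss_array p n) (\<lambda>G. G j)"
    using assms coord1 by auto
  have e: "(\<lambda>G::nat list\<Rightarrow>real. \<Prod>j\<in>{t, s}. G j) = (\<lambda>G. G t * G s)" using assms(3) by auto
  have "integrable (gauss_array p n) (\<lambda>G. \<Prod>j\<in>{t, s}. G j)"
    using P.indep_vars_integrable[OF _ ind int] by simp
  then show "integrable (gauss_array p n) (\<lambda>G. G t * G s)" unfolding e .
  have "integral\<^sup>L (gauss_array p n) (\<lambda>G. \<Prod>j\<in>{t, s}. G j) = (\<Prod>j\<in>{t, s}. integral\<^sup>L (gauss_array p n) (\<lambda>G. G j))"
    using P.indep_vars_lebesgue_integral[OF _ ind int] by simp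
  also have "\<dots> = 0" using assms coord1 by simp
  finally show "integral\<^sup>L (gauss_array p n) (\<lambda>G. G t * G s) = 0" using e by simp
qed

lemma wig_mean:
  assumes "size S = p" "set_mset S \<subseteq> {0..<n}"
  shows "integrable (gauss_array p n) (\<lambda>G. wig p G S)" "integral\<^sup>L (gauss_array p n) (\<lambda>G. wig p G S) = 0"
proof -
  have ti: "\<And>\<sigma>. \<sigma> \<in> {\<sigma>. \<sigma> permutes {..<p}} \<Longrightarrow> tup p S \<sigma> \<in> gauss_idx p n"
    using tup_in[OF assms] by auto
  show "integrable (gauss_array p n) (\<lambda>G. wig p G S)"
    unfolding wig_tup
    apply (rule Bochner_Integration.integrable_mult_right)
    apply (rule Bochner_Integration.integrable_sum)
    apply (rule coord1(1)[OF ti])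
    apply assumption
    done
  show "integral\<^sup>L (gauss_array p n) (\<lambda>G. wig p G S) = 0"
    unfolding wig_tup by (simp add: integral_sum coord1 ti)
qed

lemma wig_var:
  assumes "size S = p" "set_mset S \<subseteq> {0..<n}" "distinct (sorted_list_of_multiset S)"
  shows "integrable (gauss_array p n) (\<lambda>G. (wig p G S)^2)" "integral\<^sup>L (gauss_array p n) (\<lambda>G. (wig p G S)^2) = 1"
proof -
  let ?P = "{\<sigma>. \<sigma> permutes {..<p}}"
  let ?c = "1 / sqrt (fact p) :: real"
  have ti: "\<And>\<sigma>. \<sigma> \<in> ?P \<Longrightarrow> tup p S \<sigma> \<in> gauss_idx p n"
    using tup_in[OF assms(1,2)] by auto
  have eq: "(\<lambda>G. (wig p G S)^2) = (\<lambda>G. ?c^2 * (\<Sum>\<sigma>\<in>?P. \<Sum>\<tau>\<in>?P. G (tup p S \<sigma>) * G (tup p S \<tau>)))"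
    by (simp add: wig_tup power2_eq_square sum_product algebra_simps)
  have ii: "integrable (gauss_array p n) (\<lambda>G. G (tup p S \<sigma>) * G (tup p S \<tau>))
      \<and> integral\<^sup>L (gauss_array p n) (\<lambda>G. G (tup p S \<sigma>) * G (tup p S \<tau>)) = (if \<sigma> = \<tau> then 1 else 0)"
    if "\<sigma> \<in> ?P" "\<tau> \<in> ?P" for \<sigma> \<tau>
  proof (cases "\<sigma> = \<tau>")
    case True then show ?thesis using coord2[OF ti[OF that(1)]] by simp
  next
    case False
    then have "tup p S \<sigma> \<noteq> tup p S \<tau>" using tup_inj[OF assms(1,3)] that by auto
    then show ?thesis using cross[OF ti[OF that(1)] ti[OF that(2)]] False by simp
  qed
  show "integrable (gauss_array p n) (\<lambda>G. (wig p G S)^2)"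
    unfolding eq by (rule Bochner_Integration.integrable_mult_right, rule Bochner_Integration.integrable_sum, rule Bochner_Integration.integrable_sum) (use ii in blast)
  have "integral\<^sup>L (gauss_array p n) (\<lambda>G. (wig p G S)^2) = ?c^2 * (\<Sum>\<sigma>\<in>?P. \<Sum>\<tau>\<in>?P. (if \<sigma> = \<tau> then 1 else 0))"
  proof -
    have "integral\<^sup>L (gauss_array p n) (\<lambda>G. \<Sum>\<sigma>\<in>?P. \<Sum>\<tau>\<in>?P. G (tup p S \<sigma>) * G (tup p S \<tau>))
        = (\<Sum>\<sigma>\<in>?P. integral\<^sup>L (gauss_array p n) (\<lambda>G. \<Sum>\<tau>\<in>?P. G (tup p S \<sigma>) * G (tup p S \<tau>)))"
      by (rule Bochner_Integration.integral_sum, rule Bochner_Integration.integrable_sum) (use ii in blast)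
    also have "\<dots> = (\<Sum>\<sigma>\<in>?P. \<Sum>\<tau>\<in>?P. integral\<^sup>L (gauss_array p n) (\<lambda>G. G (tup p S \<sigma>) * G (tup p S \<tau>)))"
      by (rule sum.cong[OF refl], rule Bochner_Integration.integral_sum) (use ii in blast)
    also have "\<dots> = (\<Sum>\<sigma>\<in>?P. \<Sum>\<tau>\<in>?P. (if \<sigma> = \<tau> then 1 else 0))"
      by (rule sum.cong[OF refl], rule sum.cong[OF refl]) (use ii in blast)
    finally show ?thesis unfolding eq by simp
  qed
  also have "\<dots> = ?c^2 * card ?P"
    using finite_permutations[of "{..<p}"] by simp
  also have "card ?P = fact p" by (rule card_permutations) auto
  finally show "integral\<^sup>L (gauss_array p n) (\<lambda>G. (wig p G S)^2) = 1"
    by (simp add: power_divide)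
qed

lemma wig_restrict:
  assumes "size S = p" "set_mset S \<subseteq> {0..<n}"
  shows "wig p (restrict G {t\<in>gauss_idx p n. mset t = S}) S = wig p G S"
  unfolding wig_tup using tup_in[OF assms] tup_props(1)[OF assms(1)] by (intro arg_cong2[where f="(*)"] refl sum.cong) auto

lemma wig_meas_block:
  assumes "size S = p" "set_mset S \<subseteq> {0..<n}"
  shows "(\<lambda>g. wig p g S) \<in> borel_measurable (PiM {t\<in>gauss_idx p n. mset t = S} (\<lambda>_. borel))"
  unfolding wig_tup
  apply (intro borel_measurable_times borel_measurable_const borel_measurable_sum)
  apply (rule measurable_component_singleton)
  using tup_in[OF assms] tup_props(1)[OF assms(1)] by auto


lemma abstract_factor:
  fixes A :: "'a set" and B :: "'b set" and Sv :: "'a \<Rightarrow> nat multiset" and Sp :: "'b \<Rightarrow> nat multiset"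
  assumes fin: "finite A" "finite B" and ne: "A \<noteq> {} \<or> B \<noteq> {}"
    and Sv: "\<And>a. a \<in> A \<Longrightarrow> size (Sv a) = p \<and> set_mset (Sv a) \<subseteq> {0..<n}"
    and Sp: "\<And>b. b \<in> B \<Longrightarrow> size (Sp b) = p \<and> set_mset (Sp b) \<subseteq> {0..<n} \<and> distinct (sorted_list_of_multiset (Sp b))"
    and inj: "inj_on Sv A" "inj_on Sp B" and disj: "Sv ` A \<inter> Sp ` B = {}"
  shows "integrable (gauss_array p n) (\<lambda>G. (\<Prod>a\<in>A. wig p G (Sv a)) * (\<Prod>b\<in>B. (wig p G (Sp b))^2 - 1))
    \<and> integral\<^sup>L (gauss_array p n) (\<lambda>G. (\<Prod>a\<in>A. wig p G (Sv a)) * (\<Prod>b\<in>B. (wig p G (Sp b))^2 - 1)) = 0"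
proof -
  interpret P: prob_space "gauss_array p n" by (rule M_prob)
  define I where "I = gauss_idx p n"
  define J where "J = Inl ` A \<union> Inr ` B"
  define Sj where "Sj = case_sum Sv Sp"
  define \<phi> where "\<phi> j x = (case j of Inl a \<Rightarrow> x | Inr b \<Rightarrow> x^2 - 1)" for j :: "'a + 'b" and x :: real
  define K where "K j = {t\<in>I. mset t = Sj j}" for j
  define X where "X j G = \<phi> j (wig p G (Sj j))" for j G
  have finJ: "finite J" using fin by (simp add: J_def)
  have neJ: "J \<noteq> {}" using ne by (auto simp: J_def)
  have SjJ: "size (Sj j) = p \<and> set_mset (Sj j) \<subseteq> {0..<n}" if "j \<in> J" for j
    using that Sv Sp unfolding J_def Sj_def by fastforce
  have Sj_inj: "Sj j \<noteq> Sj j'" if "j \<in> J" "j' \<in> J" "j \<noteq> j'" for j j'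
  proof -
    from that(1,2) consider (ll) a a' where "a \<in> A" "a' \<in> A" "j = Inl a" "j' = Inl a'"
      | (lr) a b where "a \<in> A" "b \<in> B" "j = Inl a" "j' = Inr b"
      | (rl) a b where "a \<in> A" "b \<in> B" "j = Inr b" "j' = Inl a"
      | (rr) b b' where "b \<in> B" "b' \<in> B" "j = Inr b" "j' = Inr b'"
      unfolding J_def by blast
    then show ?thesis
    proof cases
      case ll then show ?thesis using that(3) inj(1) by (simp add: Sj_def inj_on_eq_iff)
    next
      case lr then show ?thesis using disj by (auto simp: Sj_def)
    next
      case rl then show ?thesis using disj by (auto simp: Sj_def)
    next
      case rr then show ?thesis using that(3) inj(2) by (simp add: Sj_def inj_on_eq_iff)
    qed
  qed
  have KI: "K j \<subseteq> I" for j by (auto simp: K_def)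
  have dK: "disjoint_family_on K J"
    unfolding disjoint_family_on_def K_def using Sj_inj by auto
  obtain t0 where "t0 \<in> K (SOME j. j \<in> J)"
  proof -
    let ?j = "SOME j. j \<in> J"
    have j: "?j \<in> J" using neJ by (simp add: some_in_eq)
    have "tup p (Sj ?j) id \<in> K ?j"
      using tup_in[of "Sj ?j" p n id] tup_props(1)[of "Sj ?j" p id] SjJ[OF j]
      by (auto simp: K_def I_def permutes_id)
    then show ?thesis using that by blast
  qed
  then have Ine: "I \<noteq> {}" using KI by blast
  have ind0: "P.indep_vars (\<lambda>_. borel) (\<lambda>t G. G t) I"
    using coord_indep Ine by (simp add: I_def)
  have ind1: "P.indep_vars (\<lambda>j. PiM (K j) (\<lambda>_. borel)) (\<lambda>j \<omega>. restrict \<omega> (K j)) J"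
    using P.indep_vars_restrict[OF ind0 KI dK] by simp
  have measY: "(\<lambda>g. \<phi> j (wig p g (Sj j))) \<in> borel_measurable (PiM (K j) (\<lambda>_. borel))" if "j \<in> J" for j
  proof -
    have m: "(\<lambda>g. wig p g (Sj j)) \<in> borel_measurable (PiM (K j) (\<lambda>_. borel))"
      using wig_meas_block[of "Sj j" p n] SjJ[OF that] by (simp add: K_def I_def)
    show ?thesis
      by (cases j) (use m in \<open>simp_all add: \<phi>_def\<close>)
  qed
  have ind2: "P.indep_vars (\<lambda>_. borel) (\<lambda>j \<omega>. \<phi> j (wig p (restrict \<omega> (K j)) (Sj j))) J"
    by (rule P.indep_vars_compose2[OF ind1 measY])
  have Xeq: "\<phi> j (wig p (restrict \<omega> (K j)) (Sj j)) = X j \<omega>" if "j \<in> J" for j \<omega>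
    using wig_restrict[of "Sj j" p n \<omega>] SjJ[OF that] by (simp add: K_def I_def X_def)
  have ind3: "P.indep_vars (\<lambda>_. borel) X J"
    using ind2 by (rule P.indep_vars_cong[THEN iffD1, rotated -1]) (auto simp: Xeq)
  have intX: "integrable (gauss_array p n) (X j) \<and> integral\<^sup>L (gauss_array p n) (X j) = 0" if "j \<in> J" for j
  proof (cases j)
    case (Inl a)
    then have a: "a \<in> A" using that by (auto simp: J_def)
    have "X j = (\<lambda>G. wig p G (Sv a))" using Inl by (simp add: X_def[abs_def] \<phi>_def Sj_def)
    then show ?thesis using wig_mean[of "Sv a" p n] Sv[OF a] by simp
  next
    case (Inr b)
    then have b: "b \<in> B" using that by (auto simp: J_def)
    have e: "X j = (\<lambda>G. (wig p G (Sp b))^2 - 1)" using Inr by (simp add: X_def[abs_def] \<phi>_def Sj_def)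
    have i1: "integrable (gauss_array p n) (\<lambda>G. (wig p G (Sp b))^2)" "integral\<^sup>L (gauss_array p n) (\<lambda>G. (wig p G (Sp b))^2) = 1"
      using wig_var[of "Sp b" p n] Sp[OF b] by auto
    have i2: "integrable (gauss_array p n) (\<lambda>G. 1::real)" by simp
    show ?thesis unfolding e using i1 i2 Bochner_Integration.integral_diff[OF i1(1) i2] P.prob_space by simp
  qed
  have prodeq: "(\<Prod>a\<in>A. wig p G (Sv a)) * (\<Prod>b\<in>B. (wig p G (Sp b))^2 - 1) = (\<Prod>j\<in>J. X j G)" for G
  proof -
    have "(\<Prod>j\<in>J. X j G) = (\<Prod>j\<in>Inl ` A. X j G) * (\<Prod>j\<in>Inr ` B. X j G)"
      unfolding J_def using fin by (intro prod.union_disjoint) auto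
    also have "\<dots> = (\<Prod>a\<in>A. wig p G (Sv a)) * (\<Prod>b\<in>B. (wig p G (Sp b))^2 - 1)"
      by (simp add: prod.reindex X_def \<phi>_def Sj_def)
    finally show ?thesis by simp
  qed
  have "integrable (gauss_array p n) (\<lambda>G. \<Prod>j\<in>J. X j G)"
    by (rule P.indep_vars_integrable[OF finJ ind3]) (use intX in blast)
  moreover have "integral\<^sup>L (gauss_array p n) (\<lambda>G. \<Prod>j\<in>J. X j G) = 0"
  proof -
    have "integral\<^sup>L (gauss_array p n) (\<lambda>G. \<Prod>j\<in>J. X j G) = (\<Prod>j\<in>J. integral\<^sup>L (gauss_array p n) (X j))"
      by (rule P.indep_vars_lebesgue_integral[OF finJ ind3]) (use intX in blast)
    also have "\<dots> = 0" using intX neJ finJ by (simp add: prod_zero_iff ex_in_conv card_gt_0_iff)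
    finally show ?thesis .
  qed
  ultimately show ?thesis unfolding prodeq by simp
qed


lemma mem_labels_at:
  assumes "finite E"
  shows "x \<in># labels_at E ends i v \<longleftrightarrow> (\<exists>e\<in>E. v \<in># ends e \<and> x = i e)"
  using assms by (auto simp: labels_at_def set_mset_sum in_replicate_mset split: if_splits)

lemma size_labels_at: "size (labels_at E ends i v) = deg E ends v"
  by (simp add: labels_at_def deg_def size_multiset_sum)

lemma two_mset:
  assumes "size M = 2" "u \<in># M" "w \<in># M" "u \<noteq> w"
  shows "M = {#u, w#}"
proof -
  obtain M' where M': "M = add_mset u M'" using assms(2) by (metis multi_member_split)
  then have "w \<in># M'" using assms(3,4) by auto
  then obtain M'' where M'': "M' = add_mset w M''" by (metis multi_member_split)
  have "size M'' = 0" using assms(1) M' M'' by simp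
  then show ?thesis using M' M'' by simp
qed

lemma image_mset_mset_set_sum:
  assumes "finite A"
  shows "image_mset f (mset_set A) = (\<Sum>a\<in>A. {#f a#})"
  using assms by (induction A rule: finite_induct) auto

lemma frob_sym: "frob_pair p V E ends u w \<Longrightarrow> frob_pair p V E ends w u"
  unfolding frob_pair_def by (auto simp: add_mset_commute)

lemma frob_uniq:
  assumes "p \<ge> 1" "frob_pair p V E ends u w" "frob_pair p V E ends u w'"
  shows "w = w'"
proof -
  have "card {e\<in>E. ends e = {#u, w#}} \<ge> 1" using assms(1,2) by (simp add: frob_pair_def)
  then obtain e where e: "e \<in> E" "ends e = {#u, w#}"
    by (metis (mono_tags, lifting) card.empty empty_Collect_eq not_one_le_zero)
  then have "ends e = {#u, w'#}" using assms(3) by (auto simp: frob_pair_def)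
  then show ?thesis using e by simp
qed

lemma frob_vertices_iff:
  "v \<in> frob_vertices p V E ends \<longleftrightarrow> (\<exists>w. frob_pair p V E ends v w)"
  unfolding frob_vertices_def frob_pairs_def by (auto intro: frob_sym)

lemma frob_pairs_iff:
  "P \<in> frob_pairs p V E ends \<longleftrightarrow> (\<exists>u w. P = {u, w} \<and> frob_pair p V E ends u w)"
  unfolding frob_pairs_def by auto

context
  fixes p n :: nat and V :: "'v set" and E :: "'e set" and ends :: "'e \<Rightarrow> 'v multiset" and i :: "'e \<Rightarrow> nat"
  assumes p1: "p \<ge> 1" and mg: "multigraph V E ends" and reg: "regular p V E ends"
    and iE: "i \<in> E \<rightarrow>\<^sub>E {0..<n}" and inj: "inj_on i E"
begin

lemma finE: "finite E" using mg by (simp add: multigraph_def)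
lemma finV: "finite V" using mg by (simp add: multigraph_def)

lemma labels_at_props:
  assumes "v \<in> V"
  shows "size (labels_at E ends i v) = p" "set_mset (labels_at E ends i v) \<subseteq> {0..<n}"
  using reg assms iE by (auto simp: size_labels_at regular_def mem_labels_at[OF finE] PiE_iff)

lemma key:
  assumes "u \<in> V" "w \<in> V" "u \<noteq> w" "labels_at E ends i u = labels_at E ends i w"
  shows "frob_pair p V E ends u w"
proof -
  have side: "ends e = {#x, y#}"
    if xy: "x \<noteq> y" "labels_at E ends i x = labels_at E ends i y" and e: "e \<in> E" "x \<in># ends e" for x y e
  proof -
    have "i e \<in># labels_at E ends i x" using e by (auto simp: mem_labels_at[OF finE])
    then obtain e' where e': "e' \<in> E" "y \<in># ends e'" "i e = i e'" using xy(2) by (auto simp: mem_labels_at[OF finE])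
    then have "e' = e" using inj e(1) by (metis inj_onD)
    then show ?thesis using two_mset[of "ends e" x y] mg e e' xy(1) by (auto simp: multigraph_def)
  qed
  have all: "\<forall>e\<in>E. (u \<in># ends e \<or> w \<in># ends e) \<longrightarrow> ends e = {#u, w#}"
    using side[of u w] side[of w u] assms(3,4) by (auto simp: add_mset_commute)
  have "deg E ends u = (\<Sum>e\<in>E. if ends e = {#u, w#} then 1 else 0)"
    unfolding deg_def
  proof (rule sum.cong[OF refl])
    fix e assume "e \<in> E"
    then show "count (ends e) u = (if ends e = {#u, w#} then 1 else 0)"
      using all assms(3) by (cases "u \<in># ends e") (auto simp: not_in_iff)
  qed
  also have "\<dots> = card {e\<in>E. ends e = {#u, w#}}"
    using finE by (simp add: sum.If_cases Int_def conj_commute)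
  finally have "card {e\<in>E. ends e = {#u, w#}} = p" using reg assms(1) by (simp add: regular_def)
  then show ?thesis using all assms by (simp add: frob_pair_def)
qed

lemma pair_labels:
  assumes "frob_pair p V E ends u w"
  shows "labels_pair E ends i {u, w} = labels_at E ends i u"
    "distinct (sorted_list_of_multiset (labels_pair E ends i {u, w}))"
proof -
  have uw: "u \<noteq> w" "u \<in> V" "w \<in> V" using assms by (auto simp: frob_pair_def)
  let ?A = "{e\<in>E. ends e = {#u, w#}}"
  have finA: "finite ?A" using finE by simp
  have lp: "labels_pair E ends i {u, w} = image_mset i (mset_set ?A)"
    using uw by (simp add: labels_pair_def)
  have "labels_at E ends i u = (\<Sum>e\<in>E. if ends e = {#u, w#} then {#i e#} else {#})"
    unfolding labels_at_def
  proof (rule sum.cong[OF refl])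
    fix e assume "e \<in> E"
    then show "replicate_mset (count (ends e) u) (i e) = (if ends e = {#u, w#} then {#i e#} else {#})"
      using assms uw(1) by (cases "u \<in># ends e") (auto simp: not_in_iff frob_pair_def)
  qed
  also have "\<dots> = (\<Sum>e\<in>?A. {#i e#})"
    using finE by (simp add: sum.If_cases Int_def conj_commute)
  also have "\<dots> = image_mset i (mset_set ?A)"
    using finA by (simp add: image_mset_mset_set_sum)
  finally show "labels_pair E ends i {u, w} = labels_at E ends i u" using lp by simp
  have injA: "inj_on i ?A" using inj by (rule inj_on_subset) auto
  have "labels_pair E ends i {u, w} = mset_set (i ` ?A)"
    using lp injA by (simp add: image_mset_mset_set)
  then show "distinct (sorted_list_of_multiset (labels_pair E ends i {u, w}))"
    by simp
qed

lemma per_label: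
  assumes "V \<noteq> {}"
  shows "integrable (gauss_array p n) (\<lambda>G. (\<Prod>v\<in>V - frob_vertices p V E ends. wig p G (labels_at E ends i v)) *
        (\<Prod>P\<in>frob_pairs p V E ends. (wig p G (labels_pair E ends i P))\<^sup>2 - 1))
    \<and> integral\<^sup>L (gauss_array p n) (\<lambda>G. (\<Prod>v\<in>V - frob_vertices p V E ends. wig p G (labels_at E ends i v)) *
        (\<Prod>P\<in>frob_pairs p V E ends. (wig p G (labels_pair E ends i P))\<^sup>2 - 1)) = 0"
proof (rule abstract_factor)
  let ?U = "frob_vertices p V E ends" and ?F = "frob_pairs p V E ends"
  let ?Sv = "labels_at E ends i" and ?Sp = "labels_pair E ends i"
  have fpV: "u \<in> V" "w \<in> V" if "frob_pair p V E ends u w" for u w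
    using that by (auto simp: frob_pair_def)
  show "finite (V - ?U)" using finV by simp
  have "?F \<subseteq> Pow V" using fpV by (auto simp: frob_pairs_iff)
  then show "finite ?F" using finV by (meson finite_Pow_iff finite_subset)
  show "V - ?U \<noteq> {} \<or> ?F \<noteq> {}"
  proof -
    obtain v where v: "v \<in> V" using assms by blast
    show ?thesis
    proof (cases "v \<in> ?U")
      case True
      then obtain w where "frob_pair p V E ends v w" by (auto simp: frob_vertices_iff)
      then have "{v, w} \<in> ?F" by (auto simp: frob_pairs_iff)
      then show ?thesis by blast
    next
      case False then show ?thesis using v by blast
    qed
  qed
  show "size (?Sv a) = p \<and> set_mset (?Sv a) \<subseteq> {0..<n}" if "a \<in> V - ?U" for a
    using labels_at_props that by auto
  show "size (?Sp b) = p \<and> set_mset (?Sp b) \<subseteq> {0..<n} \<and> distinct (sorted_list_of_multiset (?Sp b))"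
    if bF: "b \<in> ?F" for b
  proof -
    obtain u w where uw: "b = {u, w}" "frob_pair p V E ends u w" using bF by (auto simp: frob_pairs_iff)
    show ?thesis using pair_labels[OF uw(2)] labels_at_props[OF fpV(1)[OF uw(2)]] uw(1) by simp
  qed
  show "inj_on ?Sv (V - ?U)"
  proof (rule inj_onI)
    fix v w assume vw: "v \<in> V - ?U" "w \<in> V - ?U" "?Sv v = ?Sv w"
    show "v = w"
    proof (rule ccontr)
      assume "v \<noteq> w"
      then have "frob_pair p V E ends v w" using key vw by auto
      then show False using vw(1) by (auto simp: frob_vertices_iff)
    qed
  qed
  show "inj_on ?Sp ?F"
  proof (rule inj_onI)
    fix P Q assume PQ: "P \<in> ?F" "Q \<in> ?F" "?Sp P = ?Sp Q"
    obtain u w where uw: "P = {u, w}" "frob_pair p V E ends u w" using PQ(1) by (auto simp: frob_pairs_iff)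
    obtain u' w' where uw': "Q = {u', w'}" "frob_pair p V E ends u' w'" using PQ(2) by (auto simp: frob_pairs_iff)
    have eq: "?Sv u = ?Sv u'" using PQ(3) pair_labels(1)[OF uw(2)] pair_labels(1)[OF uw'(2)] uw(1) uw'(1) by simp
    show "P = Q"
    proof (cases "u = u'")
      case True
      then have "w = w'" using frob_uniq[OF p1 uw(2)] uw'(2) by simp
      then show ?thesis using True uw(1) uw'(1) by simp
    next
      case False
      then have f: "frob_pair p V E ends u u'" using key eq fpV uw(2) uw'(2) by blast
      then have "w = u'" using frob_uniq[OF p1 uw(2)] by simp
      moreover have "w' = u" using frob_uniq[OF p1 uw'(2)] frob_sym[OF f] by simp
      ultimately show ?thesis using uw(1) uw'(1) by auto
    qed
  qed
  show "?Sv ` (V - ?U) \<inter> ?Sp ` ?F = {}"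
  proof (rule ccontr)
    assume "?Sv ` (V - ?U) \<inter> ?Sp ` ?F \<noteq> {}"
    then obtain v P where vP: "v \<in> V" "v \<notin> ?U" "P \<in> ?F" "?Sv v = ?Sp P" by blast
    obtain u w where uw: "P = {u, w}" "frob_pair p V E ends u w" using vP(3) by (auto simp: frob_pairs_iff)
    have "u \<in> ?U" using uw(2) by (auto simp: frob_vertices_iff)
    then have "v \<noteq> u" using vP(2) by auto
    moreover have "?Sv v = ?Sv u" using vP(4) pair_labels(1)[OF uw(2)] uw(1) by simp
    ultimately have "frob_pair p V E ends v u" using key vP(1) fpV(1)[OF uw(2)] by blast
    then show False using vP(2) by (auto simp: frob_vertices_iff)
  qed
qed

end


theorem proposition4p5:
  fixes p n :: nat and V :: "'v set" and E :: "'e set" and ends :: "'e \<Rightarrow> 'v multiset"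
  assumes "p \<ge> 1"
    and "multigraph V E ends"
    and "V \<noteq> {}"
    and "regular p V E ends"
  shows "integrable (gauss_array p n) (\<lambda>G. mc p n V E ends (wig p G))
    \<and> (\<integral>G. mc p n V E ends (wig p G) \<partial>gauss_array p n) = 0"
proof -
  let ?L = "{i\<in>E \<rightarrow>\<^sub>E {0..<n}. inj_on i E}"
  let ?f = "\<lambda>i G. (\<Prod>v\<in>V - frob_vertices p V E ends. wig p G (labels_at E ends i v)) *
        (\<Prod>P\<in>frob_pairs p V E ends. (wig p G (labels_pair E ends i P))\<^sup>2 - 1)"
  have eq: "(\<lambda>G. mc p n V E ends (wig p G)) = (\<lambda>G. \<Sum>i\<in>?L. ?f i G)"
    by (simp add: mc_def)
  have pl: "integrable (gauss_array p n) (?f i) \<and> integral\<^sup>L (gauss_array p n) (?f i) = 0" if "i \<in> ?L" for i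
    using per_label[OF assms(1,2,4)] that assms(3) by blast
  have "integrable (gauss_array p n) (\<lambda>G. \<Sum>i\<in>?L. ?f i G)"
    by (rule Bochner_Integration.integrable_sum) (use pl in blast)
  moreover have "integral\<^sup>L (gauss_array p n) (\<lambda>G. \<Sum>i\<in>?L. ?f i G) = 0"
  proof -
    have "integral\<^sup>L (gauss_array p n) (\<lambda>G. \<Sum>i\<in>?L. ?f i G) = (\<Sum>i\<in>?L. integral\<^sup>L (gauss_array p n) (?f i))"
      by (rule Bochner_Integration.integral_sum) (use pl in blast)
    also have "\<dots> = 0" using pl by simp
    finally show ?thesis .
  qed
  ultimately show ?thesis unfolding eq by simp
qed

end
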